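(* Let $n$ and $k$ be integers with $1\le k<n/2$. If $A(n,k)\neq B(n,k)$, then $R_j=S_j=T_j$ for all $j\ge3$.
   Context: $\mathrm{DGP}(n,k)$ is the graph with vertex set $\{(u_i,j),(v_i,j): 0\le i\le n-1,\ j\in\{0,1\}\}$ and edges $\{(u_i,j),(u_{i+1},1-j)\}$ (outer edges), $\{(u_i,j),(v_i,1-j)\}$ (spokes, forming the set $\mathcal{S}$), $\{(v_i,j),(v_{i+k},1-j)\}$ (inner edges), subscripts mod $n$ (the canonical double cover of $\mathrm{GP}(n,k)$). $A(n,k)=\mathrm{Aut}(\mathrm{DGP}(n,k))$ and $B(n,k)$ is the setwise stabilizer of $\mathcal{S}$ in $A(n,k)$. For a cycle $C$, $r(C),s(C),t(C)$ are its numbers of outer edges, spokes and inner edges. For $j\ge3$, $\mathcal{C}_j$ is the set of $j$-cycles of $\mathrm{DGP}(n,k)$, and $R_j=\sum_{C\in\mathcal{C}_j}r(C)$, $S_j=\sum_{C\in\mathcal{C}_j}s(C)$, $T_j=\sum_{C\in\mathcal{C}_j}t(C)$. *)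

theory Defs
  imports Main
begin

text \<open>Vertices of DGP(n,k): triples (b, i, j) where b = True means u_i, b = False means v_i,
  i < n is the subscript and j :: bool is the layer (False = 0, True = 1).\<close>

type_synonym dvert = "bool \<times> nat \<times> bool"

definition dgp_verts :: "nat \<Rightarrow> dvert set" where
  "dgp_verts n = {(b, i, j). i < n}"

definition dgp_outer :: "nat \<Rightarrow> dvert set set" where
  "dgp_outer n = {{(True, i, j), (True, (i + 1) mod n, \<not> j)} | i j. i < n}"

definition dgp_spokes :: "nat \<Rightarrow> dvert set set" where
  "dgp_spokes n = {{(True, i, j), (False, i, \<not> j)} | i j. i < n}"

definition dgp_inner :: "nat \<Rightarrow> nat \<Rightarrow> dvert set set" where
  "dgp_inner n k = {{(False, i, j), (False, (i + k) mod n, \<not> j)} | i j. i < n}"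

definition dgp_edges :: "nat \<Rightarrow> nat \<Rightarrow> dvert set set" where
  "dgp_edges n k = dgp_outer n \<union> dgp_spokes n \<union> dgp_inner n k"

definition dgp_aut :: "nat \<Rightarrow> nat \<Rightarrow> (dvert \<Rightarrow> dvert) set" where
  "dgp_aut n k = {f. bij_betw f (dgp_verts n) (dgp_verts n)
      \<and> (\<forall>x. x \<notin> dgp_verts n \<longrightarrow> f x = x)
      \<and> (\<forall>x\<in>dgp_verts n. \<forall>y\<in>dgp_verts n.
            ({x, y} \<in> dgp_edges n k \<longleftrightarrow> {f x, f y} \<in> dgp_edges n k))}"

definition dgp_B :: "nat \<Rightarrow> nat \<Rightarrow> (dvert \<Rightarrow> dvert) set" where
  "dgp_B n k = {f \<in> dgp_aut n k. (\<lambda>e. f ` e) ` dgp_spokes n = dgp_spokes n}"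

definition dgp_cycles :: "nat \<Rightarrow> nat \<Rightarrow> nat \<Rightarrow> dvert set set set" where
  "dgp_cycles n k j = {{{xs ! i, xs ! ((i + 1) mod j)} | i. i < j} | xs.
      length xs = j \<and> distinct xs \<and> set xs \<subseteq> dgp_verts n
      \<and> (\<forall>i < j. {xs ! i, xs ! ((i + 1) mod j)} \<in> dgp_edges n k)}"

definition dgp_R :: "nat \<Rightarrow> nat \<Rightarrow> nat \<Rightarrow> nat" where
  "dgp_R n k j = (\<Sum>C\<in>dgp_cycles n k j. card (C \<inter> dgp_outer n))"

definition dgp_S :: "nat \<Rightarrow> nat \<Rightarrow> nat \<Rightarrow> nat" where
  "dgp_S n k j = (\<Sum>C\<in>dgp_cycles n k j. card (C \<inter> dgp_spokes n))"

definition dgp_T :: "nat \<Rightarrow> nat \<Rightarrow> nat \<Rightarrow> nat" where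
  "dgp_T n k j = (\<Sum>C\<in>dgp_cycles n k j. card (C \<inter> dgp_inner n k))"

end

theory Submission
  imports Defs
begin

definition oe :: "nat \<Rightarrow> nat \<Rightarrow> bool \<Rightarrow> dvert set" where
  "oe n i j = {(True, i, j), (True, (i + 1) mod n, \<not> j)}"
definition se :: "nat \<Rightarrow> bool \<Rightarrow> dvert set" where
  "se i j = {(True, i, j), (False, i, \<not> j)}"
definition ie :: "nat \<Rightarrow> nat \<Rightarrow> nat \<Rightarrow> bool \<Rightarrow> dvert set" where
  "ie n k i j = {(False, i, j), (False, (i + k) mod n, \<not> j)}"

lemma outer_eq: "dgp_outer n = (\<lambda>(i,j). oe n i j) ` ({..<n} \<times> UNIV)"
  unfolding dgp_outer_def oe_def by auto
lemma spokes_eq: "dgp_spokes n = (\<lambda>(i,j). se i j) ` ({..<n} \<times> UNIV)"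
  unfolding dgp_spokes_def se_def by auto
lemma inner_eq: "dgp_inner n k = (\<lambda>(i,j). ie n k i j) ` ({..<n} \<times> UNIV)"
  unfolding dgp_inner_def ie_def by auto

lemma verts_eq: "dgp_verts n = UNIV \<times> {..<n} \<times> UNIV"
  unfolding dgp_verts_def by auto
lemma finite_verts: "finite (dgp_verts n)"
  unfolding verts_eq by simp

lemma mod_twice:
  fixes i i' a n :: nat
  assumes "i < n" "i' < n" "i = (i' + a) mod n" "i' = (i + a) mod n" "0 < a" "2 * a < n"
  shows False
proof -
  have "i = (i + 2 * a) mod n" using assms(3,4) by (simp add: mod_simps add.assoc mult_2)
  moreover have "i + 2 * a < 2 * n" using assms(1,6) by linarith
  ultimately show False using assms
  proof (cases "i + 2 * a < n")
    case True
    then show False using \<open>i = (i + 2 * a) mod n\<close> assms(5) by simp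
  next
    case False
    then have "(i + 2 * a) mod n = i + 2 * a - n"
      using \<open>i + 2 * a < 2 * n\<close> by (simp add: le_mod_geq)
    then show False using \<open>i = (i + 2 * a) mod n\<close> assms(6) False by linarith
  qed
qed

lemma mod_inj: fixes i i' m n :: nat
  assumes "i < n" "i' < n" "(i + m) mod n = (i' + m) mod n" shows "i = i'"
proof -
  have "\<not> i < i'"
  proof
    assume "i < i'"
    then have "n dvd (i' + m) - (i + m)" using assms(3) mod_eq_dvd_iff_nat[of "i + m" "i' + m" n] by simp
    then have "n dvd i' - i" by simp
    moreover have "0 < i' - i" "i' - i < n" using \<open>i < i'\<close> assms(2) by auto
    ultimately show False using nat_dvd_not_less by blast
  qed
  moreover have "\<not> i' < i"
  proof
    assume "i' < i"
    then have "n dvd (i + m) - (i' + m)" using assms(3) mod_eq_dvd_iff_nat[of "i' + m" "i + m" n] by simp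
    then have "n dvd i - i'" by simp
    moreover have "0 < i - i'" "i - i' < n" using \<open>i' < i\<close> assms(1) by auto
    ultimately show False using nat_dvd_not_less by blast
  qed
  ultimately show ?thesis by simp
qed

lemma inj_oe: assumes "3 \<le> n" shows "inj_on (\<lambda>(i,j). oe n i j) ({..<n} \<times> UNIV)"
proof (rule inj_onI, clarsimp)
  fix i j i' j' assume h: "i < n" "i' < n" "oe n i j = oe n i' j'"
  then show "i = i' \<and> j = j'"
  proof -
    have "(i = i' \<and> j = j') \<or> (i = (i' + 1) mod n \<and> i' = (i + 1) mod n)"
      using h(3) unfolding oe_def doubleton_eq_iff prod.inject by metis
    moreover have "\<not> (i = (i' + 1) mod n \<and> i' = (i + 1) mod n)"
      using mod_twice[of i n i' 1] h(1,2) \<open>3 \<le> n\<close> by fastforce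
    ultimately show ?thesis by blast
  qed
qed

lemma inj_se: "inj_on (\<lambda>(i,j). se i j) ({..<n} \<times> UNIV)"
  by (rule inj_onI) (auto simp: se_def doubleton_eq_iff)

lemma inj_ie: assumes "0 < k" "2 * k < n" shows "inj_on (\<lambda>(i,j). ie n k i j) ({..<n} \<times> UNIV)"
proof (rule inj_onI, clarsimp)
  fix i j i' j' assume h: "i < n" "i' < n" "ie n k i j = ie n k i' j'"
  then show "i = i' \<and> j = j'"
  proof -
    have "(i = i' \<and> j = j') \<or> (i = (i' + k) mod n \<and> i' = (i + k) mod n)"
      using h(3) unfolding ie_def doubleton_eq_iff prod.inject by metis
    moreover have "\<not> (i = (i' + k) mod n \<and> i' = (i + k) mod n)"
      using mod_twice[of i n i' k] h(1,2) assms by blast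
    ultimately show ?thesis by blast
  qed
qed

lemma card_outer: "3 \<le> n \<Longrightarrow> card (dgp_outer n) = 2 * n"
  unfolding outer_eq by (subst card_image[OF inj_oe]) (auto simp: card_cartesian_product)
lemma card_spokes: "card (dgp_spokes n) = 2 * n"
  unfolding spokes_eq by (subst card_image[OF inj_se]) (auto simp: card_cartesian_product)
lemma card_inner: "0 < k \<Longrightarrow> 2 * k < n \<Longrightarrow> card (dgp_inner n k) = 2 * n"
  unfolding inner_eq by (subst card_image[OF inj_ie]) (auto simp: card_cartesian_product)


definition tr :: "nat \<Rightarrow> nat \<Rightarrow> bool \<Rightarrow> dvert \<Rightarrow> dvert" where
 "tr n m b = (\<lambda>(c,i,j). if i < n then (c, (i+m) mod n, j \<noteq> b) else (c,i,j))"

lemma tr_V: "0 < n \<Longrightarrow> tr n m b ` dgp_verts n \<subseteq> dgp_verts n"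
  unfolding tr_def dgp_verts_def by auto

lemma tr_inj: "inj_on (tr n m b) (dgp_verts n)"
proof (rule inj_onI)
  fix x y assume "x \<in> dgp_verts n" "y \<in> dgp_verts n" "tr n m b x = tr n m b y"
  then show "x = y" unfolding tr_def dgp_verts_def
    by (auto dest: mod_inj split: if_splits)
qed

lemma tr_oe: "i < n \<Longrightarrow> tr n m b ` oe n i j = oe n ((i+m) mod n) (j \<noteq> b)"
proof -
  assume "i < n"
  then have "0 < n" by simp
  have "((i + 1) mod n + m) mod n = ((i + m) mod n + 1) mod n" by (simp add: mod_simps ac_simps)
  then show ?thesis using \<open>i < n\<close> \<open>0 < n\<close> unfolding tr_def oe_def by auto
qed

lemma tr_se: "i < n \<Longrightarrow> tr n m b ` se i j = se ((i+m) mod n) (j \<noteq> b)"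
  unfolding tr_def se_def by auto

lemma tr_ie: "i < n \<Longrightarrow> tr n m b ` ie n k i j = ie n k ((i+m) mod n) (j \<noteq> b)"
proof -
  assume "i < n"
  then have "0 < n" by simp
  have "((i + k) mod n + m) mod n = ((i + m) mod n + k) mod n" by (simp add: mod_simps ac_simps)
  then show ?thesis using \<open>i < n\<close> \<open>0 < n\<close> unfolding tr_def ie_def by auto
qed

lemma tr_outer: "e \<in> dgp_outer n \<Longrightarrow> tr n m b ` e \<in> dgp_outer n"
proof -
  assume "e \<in> dgp_outer n"
  then obtain i j where ij: "i < n" "e = oe n i j" unfolding outer_eq by auto
  then have "(i + m) mod n < n" by simp
  then show ?thesis unfolding outer_eq using tr_oe[OF ij(1)] ij(2) by auto
qed

lemma tr_spokes: "e \<in> dgp_spokes n \<Longrightarrow> tr n m b ` e \<in> dgp_spokes n"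
proof -
  assume "e \<in> dgp_spokes n"
  then obtain i j where ij: "i < n" "e = se i j" unfolding spokes_eq by auto
  then have "(i + m) mod n < n" by simp
  then show ?thesis unfolding spokes_eq using tr_se[OF ij(1)] ij(2) by auto
qed

lemma tr_inner: "e \<in> dgp_inner n k \<Longrightarrow> tr n m b ` e \<in> dgp_inner n k"
proof -
  assume "e \<in> dgp_inner n k"
  then obtain i j where ij: "i < n" "e = ie n k i j" unfolding inner_eq by auto
  then have "(i + m) mod n < n" by simp
  then show ?thesis unfolding inner_eq using tr_ie[OF ij(1)] ij(2) by auto
qed

lemma tr_edges: "e \<in> dgp_edges n k \<Longrightarrow> tr n m b ` e \<in> dgp_edges n k"
  unfolding dgp_edges_def using tr_outer tr_spokes tr_inner by blast

lemma edges_sub: "e \<in> dgp_edges n k \<Longrightarrow> e \<subseteq> dgp_verts n"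
  unfolding dgp_edges_def dgp_outer_def dgp_spokes_def dgp_inner_def dgp_verts_def by auto

lemma cyc_sub: "C \<in> dgp_cycles n k j \<Longrightarrow> C \<subseteq> dgp_edges n k"
  unfolding dgp_cycles_def by auto

lemma finite_cyc: "finite (dgp_cycles n k j)"
proof -
  have "dgp_cycles n k j \<subseteq> Pow (Pow (dgp_verts n))"
    using cyc_sub edges_sub by blast
  then show ?thesis using finite_verts by (meson finite_Pow_iff finite_subset)
qed

definition NN :: "nat \<Rightarrow> nat \<Rightarrow> nat \<Rightarrow> dvert set \<Rightarrow> nat" where
  "NN n k j e = card {C \<in> dgp_cycles n k j. e \<in> C}"

lemma cyc_map:
  assumes inj: "inj_on g (dgp_verts n)" and gV: "g ` dgp_verts n \<subseteq> dgp_verts n"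
    and gE: "\<forall>e\<in>dgp_edges n k. g ` e \<in> dgp_edges n k"
    and C: "C \<in> dgp_cycles n k j"
  shows "(\<lambda>e. g ` e) ` C \<in> dgp_cycles n k j"
proof -
  obtain xs where C_eq: "C = {{xs ! i, xs ! ((i + 1) mod j)} | i. i < j}"
    and len: "length xs = j" and dist: "distinct xs" and sV: "set xs \<subseteq> dgp_verts n"
    and ed: "\<forall>i < j. {xs ! i, xs ! ((i + 1) mod j)} \<in> dgp_edges n k"
    using C unfolding dgp_cycles_def by blast
  define ys where "ys = map g xs"
  have md: "i < j \<Longrightarrow> (i + 1) mod j < j" for i by simp
  have ys_i: "i < j \<Longrightarrow> ys ! i = g (xs ! i)" for i using len ys_def by simp
  have ys_s: "i < j \<Longrightarrow> ys ! ((i + 1) mod j) = g (xs ! ((i + 1) mod j))" for i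
    using len ys_def md by simp
  have C_eq': "C = (\<lambda>i. {xs ! i, xs ! ((i + 1) mod j)}) ` {..<j}" unfolding C_eq by auto
  have "(\<lambda>e. g ` e) ` C = (\<lambda>i. {ys ! i, ys ! ((i + 1) mod j)}) ` {..<j}"
    unfolding C_eq' image_image using ys_i ys_s by (intro image_cong) auto
  also have "\<dots> = {{ys ! i, ys ! ((i + 1) mod j)} | i. i < j}" by auto
  finally have img2: "(\<lambda>e. g ` e) ` C = {{ys ! i, ys ! ((i + 1) mod j)} | i. i < j}" .
  have "length ys = j" using len ys_def by simp
  moreover have "distinct ys" unfolding ys_def using dist inj sV
    by (simp add: distinct_map inj_on_subset)
  moreover have "set ys \<subseteq> dgp_verts n" unfolding ys_def using sV gV by auto
  moreover have "\<forall>i < j. {ys ! i, ys ! ((i + 1) mod j)} \<in> dgp_edges n k"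
  proof (intro allI impI)
    fix i assume "i < j"
    then have "g ` {xs ! i, xs ! ((i + 1) mod j)} \<in> dgp_edges n k" using ed gE by blast
    then show "{ys ! i, ys ! ((i + 1) mod j)} \<in> dgp_edges n k"
      unfolding ys_def using \<open>i < j\<close> md len by simp
  qed
  ultimately show ?thesis unfolding img2 dgp_cycles_def by blast
qed

lemma NN_inv:
  assumes inj: "inj_on g (dgp_verts n)" and gV: "g ` dgp_verts n \<subseteq> dgp_verts n"
    and gE: "\<forall>e\<in>dgp_edges n k. g ` e \<in> dgp_edges n k"
    and e: "e \<subseteq> dgp_verts n"
  shows "NN n k j (g ` e) = NN n k j e"
proof -
  let ?V = "dgp_verts n"
  let ?cyc = "dgp_cycles n k j"
  let ?\<Phi> = "\<lambda>C. (\<lambda>e. g ` e) ` C"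
  have inj1: "inj_on (\<lambda>e. g ` e) (Pow ?V)"
    using inj by (metis inj_on_image Union_Pow_eq)
  have inj2: "inj_on ?\<Phi> (Pow (Pow ?V))"
    using inj1 by (metis inj_on_image Union_Pow_eq)
  have cycP: "?cyc \<subseteq> Pow (Pow ?V)" using cyc_sub edges_sub by blast
  have injc: "inj_on ?\<Phi> ?cyc" using inj_on_subset[OF inj2 cycP] .
  have sub: "?\<Phi> ` ?cyc \<subseteq> ?cyc" using cyc_map[OF inj gV gE] by blast
  have surj: "?\<Phi> ` ?cyc = ?cyc" using endo_inj_surj[OF finite_cyc sub injc] .
  have eq: "{C \<in> ?cyc. g ` e \<in> C} = ?\<Phi> ` {C \<in> ?cyc. e \<in> C}"
  proof
    show "?\<Phi> ` {C \<in> ?cyc. e \<in> C} \<subseteq> {C \<in> ?cyc. g ` e \<in> C}" using sub by blast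
  next
    show "{C \<in> ?cyc. g ` e \<in> C} \<subseteq> ?\<Phi> ` {C \<in> ?cyc. e \<in> C}"
    proof
      fix C' assume "C' \<in> {C \<in> ?cyc. g ` e \<in> C}"
      then have C': "C' \<in> ?cyc" "g ` e \<in> C'" by auto
      then obtain C where C: "C \<in> ?cyc" "C' = ?\<Phi> C" using surj by (metis imageE)
      then obtain e' where e': "e' \<in> C" "g ` e = g ` e'" using C' by auto
      have "e' \<subseteq> ?V" using e' C cycP by blast
      then have "e = e'" using inj1 e e' by (auto dest: inj_onD)
      then show "C' \<in> ?\<Phi> ` {C \<in> ?cyc. e \<in> C}" using C e' by blast
    qed
  qed
  have "inj_on ?\<Phi> {C \<in> ?cyc. e \<in> C}" using injc by (rule inj_on_subset) blast
  then show ?thesis unfolding NN_def eq by (simp add: card_image)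
qed

lemma NN_oe: assumes "0 < n" "i < n" shows "NN n k j (oe n i j') = NN n k j (oe n 0 False)"
proof -
  have "tr n i j' ` oe n 0 False = oe n i j'" using assms tr_oe[where i=0 and m=i and b=j' and j=False] by simp
  moreover have "oe n 0 False \<subseteq> dgp_verts n" using assms unfolding oe_def dgp_verts_def by auto
  ultimately show ?thesis using NN_inv[OF tr_inj tr_V[OF assms(1)]] tr_edges by metis
qed

lemma NN_se: assumes "0 < n" "i < n" shows "NN n k j (se i j') = NN n k j (se 0 False)"
proof -
  have "tr n i j' ` se 0 False = se i j'" using assms tr_se[where i=0 and m=i and b=j' and j=False] by simp
  moreover have "se 0 False \<subseteq> dgp_verts n" using assms unfolding se_def dgp_verts_def by auto
  ultimately show ?thesis using NN_inv[OF tr_inj tr_V[OF assms(1)]] tr_edges by metis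
qed

lemma NN_ie: assumes "0 < n" "i < n" shows "NN n k j (ie n k i j') = NN n k j (ie n k 0 False)"
proof -
  have "tr n i j' ` ie n k 0 False = ie n k i j'" using assms tr_ie[where i=0 and m=i and b=j' and j=False] by simp
  moreover have "ie n k 0 False \<subseteq> dgp_verts n" using assms unfolding ie_def dgp_verts_def by auto
  ultimately show ?thesis using NN_inv[OF tr_inj tr_V[OF assms(1)]] tr_edges by metis
qed

lemma double_count:
  assumes "finite X"
  shows "(\<Sum>C\<in>dgp_cycles n k j. card (C \<inter> X)) = (\<Sum>e\<in>X. NN n k j e)"
proof -
  have "(\<Sum>C\<in>dgp_cycles n k j. card (C \<inter> X)) = (\<Sum>C\<in>dgp_cycles n k j. \<Sum>e\<in>X. if e \<in> C then 1 else 0)"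
    using assms by (intro sum.cong refl) (simp add: sum.If_cases Int_commute)
  also have "\<dots> = (\<Sum>e\<in>X. \<Sum>C\<in>dgp_cycles n k j. if e \<in> C then 1 else 0)"
    by (rule sum.swap)
  also have "\<dots> = (\<Sum>e\<in>X. NN n k j e)"
    unfolding NN_def using finite_cyc by (intro sum.cong refl) (simp add: sum.If_cases Int_def)
  finally show ?thesis .
qed


lemma finite_outer: "finite (dgp_outer n)" unfolding outer_eq by simp
lemma finite_spokes: "finite (dgp_spokes n)" unfolding spokes_eq by simp
lemma finite_inner: "finite (dgp_inner n k)" unfolding inner_eq by simp

lemma outer_fst: "e \<in> dgp_outer n \<Longrightarrow> x \<in> e \<Longrightarrow> fst x"
  unfolding dgp_outer_def by auto
lemma inner_fst: "e \<in> dgp_inner n k \<Longrightarrow> x \<in> e \<Longrightarrow> \<not> fst x"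
  unfolding dgp_inner_def by auto
lemma mixed_spoke: "e \<in> dgp_edges n k \<Longrightarrow> x \<in> e \<Longrightarrow> y \<in> e \<Longrightarrow> fst x \<Longrightarrow> \<not> fst y
  \<Longrightarrow> e \<in> dgp_spokes n"
  unfolding dgp_edges_def using outer_fst inner_fst by blast

lemma edge_pair: "e \<in> dgp_edges n k \<Longrightarrow> \<exists>x y. e = {x, y}"
  unfolding dgp_edges_def dgp_outer_def dgp_spokes_def dgp_inner_def by blast

lemma aut_facts:
  assumes "f \<in> dgp_aut n k"
  shows "inj_on f (dgp_verts n)" "f ` dgp_verts n \<subseteq> dgp_verts n"
    "\<forall>e\<in>dgp_edges n k. f ` e \<in> dgp_edges n k"
proof -
  have b: "bij_betw f (dgp_verts n) (dgp_verts n)"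
    and adj: "\<forall>x\<in>dgp_verts n. \<forall>y\<in>dgp_verts n. ({x, y} \<in> dgp_edges n k \<longleftrightarrow> {f x, f y} \<in> dgp_edges n k)"
    using assms unfolding dgp_aut_def by blast+
  show "inj_on f (dgp_verts n)" using b by (simp add: bij_betw_def)
  show "f ` dgp_verts n \<subseteq> dgp_verts n" using b by (simp add: bij_betw_def)
  show "\<forall>e\<in>dgp_edges n k. f ` e \<in> dgp_edges n k"
  proof
    fix e assume e: "e \<in> dgp_edges n k"
    then obtain x y where xy: "e = {x, y}" using edge_pair by blast
    then have "x \<in> dgp_verts n" "y \<in> dgp_verts n" using edges_sub[OF e] by auto
    then show "f ` e \<in> dgp_edges n k" using adj e xy by simp
  qed
qed

lemma NN_aut: "f \<in> dgp_aut n k \<Longrightarrow> e \<in> dgp_edges n k \<Longrightarrow> NN n k j (f ` e) = NN n k j e"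
  using NN_inv[OF aut_facts(1,2,3)] edges_sub by blast

lemma spokes_to_B:
  assumes f: "f \<in> dgp_aut n k" and S: "\<forall>e\<in>dgp_spokes n. f ` e \<in> dgp_spokes n"
  shows "f \<in> dgp_B n k"
proof -
  have inj1: "inj_on (\<lambda>e. f ` e) (Pow (dgp_verts n))"
    using aut_facts(1)[OF f] by (metis inj_on_image Union_Pow_eq)
  have "dgp_spokes n \<subseteq> Pow (dgp_verts n)" using edges_sub unfolding dgp_edges_def by blast
  then have "inj_on (\<lambda>e. f ` e) (dgp_spokes n)" using inj1 inj_on_subset by blast
  moreover have "(\<lambda>e. f ` e) ` dgp_spokes n \<subseteq> dgp_spokes n" using S by blast
  ultimately have "(\<lambda>e. f ` e) ` dgp_spokes n = dgp_spokes n"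
    using endo_inj_surj[OF finite_spokes] by blast
  then show ?thesis using f unfolding dgp_B_def by blast
qed

lemma fst_pres_to_B:
  assumes f: "f \<in> dgp_aut n k" and P: "\<forall>x\<in>dgp_verts n. fst (f x) = fst x"
  shows "f \<in> dgp_B n k"
proof (rule spokes_to_B[OF f], rule ballI)
  fix e assume e: "e \<in> dgp_spokes n"
  then obtain i j where ij: "i < n" "e = se i j" unfolding spokes_eq by auto
  have V: "(True, i, j) \<in> dgp_verts n" "(False, i, \<not> j) \<in> dgp_verts n"
    using ij unfolding dgp_verts_def by auto
  have eE: "e \<in> dgp_edges n k" using e unfolding dgp_edges_def by blast
  then have fe: "f ` e \<in> dgp_edges n k" using aut_facts(3)[OF f] by blast
  show "f ` e \<in> dgp_spokes n"
  proof (rule mixed_spoke[OF fe, of "f (True, i, j)" "f (False, i, \<not> j)"])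
    show "f (True, i, j) \<in> f ` e" "f (False, i, \<not> j) \<in> f ` e" using ij(2) unfolding se_def by blast+
    show "fst (f (True, i, j))" using P V(1) by (metis fst_conv)
    show "\<not> fst (f (False, i, \<not> j))" using P V(2) by (metis fst_conv)
  qed
qed

lemma true_pres:
  assumes f: "f \<in> dgp_aut n k" and P: "\<forall>x\<in>dgp_verts n. fst x \<longrightarrow> fst (f x)"
  shows "\<forall>x\<in>dgp_verts n. fst (f x) = fst x"
proof
  let ?U = "{x \<in> dgp_verts n. fst x}"
  have inj: "inj_on f (dgp_verts n)" and fV: "f ` dgp_verts n \<subseteq> dgp_verts n"
    using aut_facts[OF f] by auto
  have "f ` ?U \<subseteq> ?U" using P fV by auto
  moreover have "inj_on f ?U" by (rule inj_on_subset[OF inj]) auto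
  moreover have "finite ?U" using finite_verts by simp
  ultimately have U: "f ` ?U = ?U" using endo_inj_surj by blast
  fix x assume x: "x \<in> dgp_verts n"
  show "fst (f x) = fst x"
  proof (cases "fst x")
    case True then show ?thesis using P x by auto
  next
    case False
    show ?thesis
    proof (rule ccontr)
      assume "fst (f x) \<noteq> fst x"
      then have "f x \<in> ?U" using False x fV by auto
      then obtain u where "u \<in> ?U" "f u = f x" using U by (metis (no_types, lifting) imageE)
      then have "u = x" using inj x by (auto dest: inj_onD)
      then show False using \<open>u \<in> ?U\<close> False by simp
    qed
  qed
qed

lemma false_pres:
  assumes f: "f \<in> dgp_aut n k" and P: "\<forall>x\<in>dgp_verts n. \<not> fst x \<longrightarrow> \<not> fst (f x)"
  shows "\<forall>x\<in>dgp_verts n. fst (f x) = fst x"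
proof
  let ?U = "{x \<in> dgp_verts n. \<not> fst x}"
  have inj: "inj_on f (dgp_verts n)" and fV: "f ` dgp_verts n \<subseteq> dgp_verts n"
    using aut_facts[OF f] by auto
  have "f ` ?U \<subseteq> ?U" using P fV by auto
  moreover have "inj_on f ?U" by (rule inj_on_subset[OF inj]) auto
  moreover have "finite ?U" using finite_verts by simp
  ultimately have U: "f ` ?U = ?U" using endo_inj_surj by blast
  fix x assume x: "x \<in> dgp_verts n"
  show "fst (f x) = fst x"
  proof (cases "fst x")
    case False then show ?thesis using P x by auto
  next
    case True
    show ?thesis
    proof (rule ccontr)
      assume "fst (f x) \<noteq> fst x"
      then have "f x \<in> ?U" using True x fV by auto
      then obtain u where "u \<in> ?U" "f u = f x" using U by (metis (no_types, lifting) imageE)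
      then have "u = x" using inj x by (auto dest: inj_onD)
      then show False using \<open>u \<in> ?U\<close> True by simp
    qed
  qed
qed

lemma outer_to_B:
  assumes f: "f \<in> dgp_aut n k" and O: "\<forall>e\<in>dgp_outer n. f ` e \<in> dgp_outer n"
  shows "f \<in> dgp_B n k"
proof -
  have "\<forall>x\<in>dgp_verts n. fst x \<longrightarrow> fst (f x)"
  proof (intro ballI impI)
    fix x assume x: "x \<in> dgp_verts n" "fst x"
    then obtain i j where xe: "x = (True, i, j)" "i < n" unfolding dgp_verts_def
      by (cases x) auto
    have "oe n i j \<in> dgp_outer n" using xe unfolding outer_eq by auto
    moreover have "x \<in> oe n i j" using xe unfolding oe_def by auto
    ultimately show "fst (f x)" using O outer_fst by blast
  qed
  then show ?thesis using fst_pres_to_B[OF f true_pres[OF f]] by blast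
qed

lemma inner_to_B:
  assumes f: "f \<in> dgp_aut n k" and I: "\<forall>e\<in>dgp_inner n k. f ` e \<in> dgp_inner n k"
  shows "f \<in> dgp_B n k"
proof -
  have "\<forall>x\<in>dgp_verts n. \<not> fst x \<longrightarrow> \<not> fst (f x)"
  proof (intro ballI impI)
    fix x assume x: "x \<in> dgp_verts n" "\<not> fst x"
    then obtain i j where xe: "x = (False, i, j)" "i < n" unfolding dgp_verts_def
      by (cases x) auto
    have "ie n k i j \<in> dgp_inner n k" using xe unfolding inner_eq by auto
    moreover have "x \<in> ie n k i j" using xe unfolding ie_def by auto
    ultimately show "\<not> fst (f x)" using I inner_fst by blast
  qed
  then show ?thesis using fst_pres_to_B[OF f false_pres[OF f]] by blast
qed


lemma NN_outer_const: "0 < n \<Longrightarrow> e \<in> dgp_outer n \<Longrightarrow> NN n k j e = NN n k j (oe n 0 False)"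
proof -
  assume "0 < n" "e \<in> dgp_outer n"
  then obtain i j' where "i < n" "e = oe n i j'" unfolding dgp_outer_def oe_def by blast
  then show ?thesis using NN_oe[OF \<open>0 < n\<close>] by blast
qed
lemma NN_spokes_const: "0 < n \<Longrightarrow> e \<in> dgp_spokes n \<Longrightarrow> NN n k j e = NN n k j (se 0 False)"
proof -
  assume "0 < n" "e \<in> dgp_spokes n"
  then obtain i j' where "i < n" "e = se i j'" unfolding dgp_spokes_def se_def by blast
  then show ?thesis using NN_se[OF \<open>0 < n\<close>] by blast
qed
lemma NN_inner_const: "0 < n \<Longrightarrow> e \<in> dgp_inner n k \<Longrightarrow> NN n k j e = NN n k j (ie n k 0 False)"
proof -
  assume "0 < n" "e \<in> dgp_inner n k"
  then obtain i j' where "i < n" "e = ie n k i j'" unfolding dgp_inner_def ie_def by blast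
  then show ?thesis using NN_ie[OF \<open>0 < n\<close>] by blast
qed

theorem lemma5p7:
  fixes n k :: nat
  assumes "1 \<le> k" and "2 * k < n"
    and "dgp_aut n k \<noteq> dgp_B n k"
  shows "\<forall>j\<ge>3. dgp_R n k j = dgp_S n k j \<and> dgp_S n k j = dgp_T n k j"
proof (intro allI impI)
  fix j :: nat
  have n0: "0 < n" and n3: "3 \<le> n" and k0: "0 < k" using assms(1,2) by auto
  have "dgp_B n k \<subseteq> dgp_aut n k" unfolding dgp_B_def by blast
  then obtain f where f: "f \<in> dgp_aut n k" "f \<notin> dgp_B n k" using assms(3) by blast
  define a where "a = NN n k j (oe n 0 False)"
  define b where "b = NN n k j (se 0 False)"
  define c where "c = NN n k j (ie n k 0 False)"
  have Oa: "e \<in> dgp_outer n \<Longrightarrow> NN n k j e = a" for e using NN_outer_const[OF n0] a_def by blast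
  have Sb: "e \<in> dgp_spokes n \<Longrightarrow> NN n k j e = b" for e using NN_spokes_const[OF n0] b_def by blast
  have Ic: "e \<in> dgp_inner n k \<Longrightarrow> NN n k j e = c" for e using NN_inner_const[OF n0] c_def by blast
  have fE: "e \<in> dgp_edges n k \<Longrightarrow> f ` e \<in> dgp_edges n k" for e using aut_facts(3)[OF f(1)] by blast
  have fN: "e \<in> dgp_edges n k \<Longrightarrow> NN n k j (f ` e) = NN n k j e" for e using NN_aut[OF f(1)] by blast
  have "b = a \<or> b = c"
  proof -
    obtain e where e: "e \<in> dgp_spokes n" "f ` e \<notin> dgp_spokes n"
      using spokes_to_B[OF f(1)] f(2) by blast
    have eE: "e \<in> dgp_edges n k" using e unfolding dgp_edges_def by blast
    then have "f ` e \<in> dgp_outer n \<or> f ` e \<in> dgp_inner n k" using fE e(2) unfolding dgp_edges_def by blast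
    then show ?thesis using fN[OF eE] Sb[OF e(1)] Oa Ic by metis
  qed
  moreover have "a = b \<or> a = c"
  proof -
    obtain e where e: "e \<in> dgp_outer n" "f ` e \<notin> dgp_outer n"
      using outer_to_B[OF f(1)] f(2) by blast
    have eE: "e \<in> dgp_edges n k" using e unfolding dgp_edges_def by blast
    then have "f ` e \<in> dgp_spokes n \<or> f ` e \<in> dgp_inner n k" using fE e(2) unfolding dgp_edges_def by blast
    then show ?thesis using fN[OF eE] Oa[OF e(1)] Sb Ic by metis
  qed
  moreover have "c = a \<or> c = b"
  proof -
    obtain e where e: "e \<in> dgp_inner n k" "f ` e \<notin> dgp_inner n k"
      using inner_to_B[OF f(1)] f(2) by blast
    have eE: "e \<in> dgp_edges n k" using e unfolding dgp_edges_def by blast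
    then have "f ` e \<in> dgp_outer n \<or> f ` e \<in> dgp_spokes n" using fE e(2) unfolding dgp_edges_def by blast
    then show ?thesis using fN[OF eE] Ic[OF e(1)] Oa Sb by metis
  qed
  ultimately have abc: "a = b" "b = c" by auto
  have R: "dgp_R n k j = 2 * n * a"
    unfolding dgp_R_def double_count[OF finite_outer]
    using Oa card_outer[OF n3] by simp
  have S: "dgp_S n k j = 2 * n * b"
    unfolding dgp_S_def double_count[OF finite_spokes]
    using Sb card_spokes by simp
  have T: "dgp_T n k j = 2 * n * c"
    unfolding dgp_T_def double_count[OF finite_inner]
    using Ic card_inner[OF k0 assms(2)] by simp
  show "dgp_R n k j = dgp_S n k j \<and> dgp_S n k j = dgp_T n k j"
    using R S T abc by simp
qed

end
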